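(* For $k \in \mathbb{N}$ let $o(k) \in \mathbb{N}_0$ be the smallest $n \in \mathbb{N}_0$ with $2^n - n \ge k$. Then (1) $\{n(F) : F \in \mathcal{UHIT}_{\delta=k}\} = \{n(F) : F \in \mathcal{MU}_{\delta=k}\} = \{n \in \mathbb{N}_0 : n \ge o(k)\}$; (2) $\{c(F) : F \in \mathcal{UHIT}_{\delta=k}\} = \{c(F) : F \in \mathcal{MU}_{\delta=k}\} = \{n \in \mathbb{N} : n \ge o(k) + k\}$.
   Context: Literals come with a fixed-point-free involution $x \mapsto \overline{x}$; variables are positive literals. A clause is a finite set $C$ of literals with $C \cap \overline{C} = \emptyset$; a clause-set is a finite set of clauses. $\mathrm{var}(F)$, $n(F) = |\mathrm{var}(F)|$, $c(F) = |F|$, $\delta(F) = c(F) - n(F)$. $\mathcal{MU}$ is the class of minimally unsatisfiable clause-sets (unsatisfiable, but removing any clause gives a satisfiable clause-set). $F$ is hitting if for all distinct $C, D \in F$, $C \cap \overline{D} \ne \emptyset$; $\mathcal{UHIT}$ is the class of unsatisfiable hitting clause-sets. $\mathcal{C}_{\delta=k} = \{F \in \mathcal{C} : \delta(F) = k\}$. *)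

theory Defs
  imports Main
begin

datatype lit = Pos nat | Neg nat

fun comp_lit :: "lit \<Rightarrow> lit" where
  "comp_lit (Pos v) = Neg v"
| "comp_lit (Neg v) = Pos v"

definition comp_set :: "lit set \<Rightarrow> lit set" where
  "comp_set C = comp_lit ` C"

fun lit_var :: "lit \<Rightarrow> nat" where
  "lit_var (Pos v) = v"
| "lit_var (Neg v) = v"

definition is_clause :: "lit set \<Rightarrow> bool" where
  "is_clause C \<longleftrightarrow> finite C \<and> C \<inter> comp_set C = {}"

definition is_clause_set :: "lit set set \<Rightarrow> bool" where
  "is_clause_set F \<longleftrightarrow> finite F \<and> (\<forall>C\<in>F. is_clause C)"

definition vars :: "lit set set \<Rightarrow> nat set" where
  "vars F = (\<Union>C\<in>F. lit_var ` C)"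

definition nvars :: "lit set set \<Rightarrow> nat" where
  "nvars F = card (vars F)"

definition ncls :: "lit set set \<Rightarrow> nat" where
  "ncls F = card F"

definition deficiency :: "lit set set \<Rightarrow> int" where
  "deficiency F = int (ncls F) - int (nvars F)"

fun lit_true :: "(nat \<Rightarrow> bool) \<Rightarrow> lit \<Rightarrow> bool" where
  "lit_true a (Pos v) = a v"
| "lit_true a (Neg v) = (\<not> a v)"

definition satisfiable :: "lit set set \<Rightarrow> bool" where
  "satisfiable F \<longleftrightarrow> (\<exists>a. \<forall>C\<in>F. \<exists>x\<in>C. lit_true a x)"

definition MU :: "lit set set set" where
  "MU = {F. is_clause_set F \<and> \<not> satisfiable F \<and> (\<forall>C\<in>F. satisfiable (F - {C}))}"

definition hitting :: "lit set set \<Rightarrow> bool" where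
  "hitting F \<longleftrightarrow> (\<forall>C\<in>F. \<forall>D\<in>F. C \<noteq> D \<longrightarrow> C \<inter> comp_set D \<noteq> {})"

definition UHIT :: "lit set set set" where
  "UHIT = {F. is_clause_set F \<and> \<not> satisfiable F \<and> hitting F}"

definition with_deficiency :: "lit set set set \<Rightarrow> int \<Rightarrow> lit set set set" where
  "with_deficiency \<C> k = {F \<in> \<C>. deficiency F = k}"

definition ofun :: "nat \<Rightarrow> nat" where
  "ofun k = (LEAST n. (2::int) ^ n - int n \<ge> int k)"

end

theory Submission
  imports Defs
begin

fun T :: "nat \<Rightarrow> nat \<Rightarrow> lit set set" where
  "T 0 c = {{}}"
| "T (Suc n) c = (if c \<le> 1 then {{}} else
     insert (Pos n) ` T n (min (2^n) (c-1)) \<union> insert (Neg n) ` T n (c - min (2^n) (c-1)))"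

lemma T_sub: "\<forall>C\<in>T n c. \<forall>x\<in>C. lit_var x < n"
proof (induction n arbitrary: c)
  case (Suc n)
  show ?case
  proof (cases "c \<le> 1")
    case False
    have "\<forall>C\<in>T n d. \<forall>x\<in>C. lit_var x < Suc n" for d using Suc.IH less_SucI by blast
    then show ?thesis using False by auto
  qed simp
qed simp

lemma T_fin: "finite (T n c) \<and> (\<forall>C\<in>T n c. finite C)"
  by (induction n arbitrary: c) (auto)

lemma T_card: "1 \<le> c \<Longrightarrow> c \<le> 2^n \<Longrightarrow> card (T n c) = c"
proof (induction n arbitrary: c)
  case 0
  then show ?case by simp
next
  case (Suc n)
  show ?case
  proof (cases "c \<le> 1")
    case True
    then show ?thesis using Suc by simp
  next
    case False
    define c1 where "c1 = min (2^n) (c-1)"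
    have h1: "1 \<le> c1" "c1 \<le> 2^n" "1 \<le> c - c1" "c - c1 \<le> 2^n"
      using False Suc.prems by (auto simp: c1_def)
    have inj: "inj_on (insert l) (T n d)" if "lit_var l = n" for l d
    proof (rule inj_onI)
      fix A B assume "A \<in> T n d" "B \<in> T n d" "insert l A = insert l B"
      moreover have "l \<notin> A" "l \<notin> B" using T_sub[of n d] that \<open>A \<in> T n d\<close> \<open>B \<in> T n d\<close> by fastforce+
      ultimately show "A = B" by (metis insert_ident)
    qed
    have disj: "insert (Pos n) ` T n c1 \<inter> insert (Neg n) ` T n (c - c1) = {}"
      using T_sub[of n "c - c1"] by fastforce
    have e: "T (Suc n) c = insert (Pos n) ` T n c1 \<union> insert (Neg n) ` T n (c - c1)"
      using False by (simp add: c1_def)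
    have "card (T (Suc n) c) = card (insert (Pos n) ` T n c1) + card (insert (Neg n) ` T n (c - c1))"
      unfolding e using disj T_fin by (simp add: card_Un_disjoint)
    also have "\<dots> = c1 + (c - c1)"
      using inj[of "Pos n"] inj[of "Neg n"] Suc.IH h1 by (simp add: card_image)
    finally show ?thesis using h1 by simp
  qed
qed

lemma T_clause: "\<forall>C\<in>T n c. \<forall>x\<in>C. comp_lit x \<notin> C"
proof (induction n arbitrary: c)
  case 0
  then show ?case by simp
next
  case (Suc n)
  have s: "\<forall>C\<in>T n d. \<forall>x\<in>C. lit_var x < n" for d using T_sub by blast
  show ?case
  proof (cases "c \<le> 1")
    case True then show ?thesis by simp
  next
    case False
    show ?thesis
    proof
      fix C assume "C \<in> T (Suc n) c"
      then obtain D l d where D: "D \<in> T n d" "C = insert l D" "l = Pos n \<or> l = Neg n"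
        using False by auto
      show "\<forall>x\<in>C. comp_lit x \<notin> C"
      proof
        fix x assume "x \<in> C"
        have vD: "\<forall>y\<in>D. lit_var y \<noteq> n" using s[of d] D(1) by blast
        have nl: "comp_lit l \<notin> D" "l \<notin> D" using vD D(3) by auto
        show "comp_lit x \<notin> C"
        proof (cases "x = l")
          case True then show ?thesis using D nl by (auto)
        next
          case False
          then have "x \<in> D" using \<open>x \<in> C\<close> D by auto
          then have "comp_lit x \<notin> D" using Suc.IH D by blast
          moreover have "comp_lit x \<noteq> l" using vD \<open>x \<in> D\<close> D(3) by (cases x) auto
          ultimately show ?thesis using D by auto
        qed
      qed
    qed
  qed
qed

lemma T_unsat: "\<exists>C\<in>T n c. \<forall>x\<in>C. \<not> lit_true a x"
proof (induction n arbitrary: c)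
  case 0
  then show ?case by simp
next
  case (Suc n)
  show ?case
  proof (cases "c \<le> 1")
    case True then show ?thesis by simp
  next
    case False
    define c1 where "c1 = min (2^n) (c-1)"
    have e: "T (Suc n) c = insert (Pos n) ` T n c1 \<union> insert (Neg n) ` T n (c - c1)"
      using False by (simp add: c1_def)
    show ?thesis
    proof (cases "a n")
      case True
      obtain D where D: "D \<in> T n (c - c1)" "\<forall>x\<in>D. \<not> lit_true a x" using Suc.IH by blast
      have "insert (Neg n) D \<in> T (Suc n) c" unfolding e using D(1) by blast
      moreover have "\<forall>x\<in>insert (Neg n) D. \<not> lit_true a x" using D(2) True by simp
      ultimately show ?thesis by blast
    next
      case f: False
      obtain D where D: "D \<in> T n c1" "\<forall>x\<in>D. \<not> lit_true a x" using Suc.IH by blast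
      have "insert (Pos n) D \<in> T (Suc n) c" unfolding e using D(1) by blast
      moreover have "\<forall>x\<in>insert (Pos n) D. \<not> lit_true a x" using D(2) f by simp
      ultimately show ?thesis by blast
    qed
  qed
qed

lemma T_hit: "\<forall>C\<in>T n c. \<forall>D\<in>T n c. C \<noteq> D \<longrightarrow> (\<exists>x\<in>C. comp_lit x \<in> D)"
proof (induction n arbitrary: c)
  case 0
  then show ?case by simp
next
  case (Suc n)
  show ?case
  proof (cases "c \<le> 1")
    case True then show ?thesis by simp
  next
    case False
    define c1 where "c1 = min (2^n) (c-1)"
    have e: "T (Suc n) c = insert (Pos n) ` T n c1 \<union> insert (Neg n) ` T n (c - c1)"
      using False by (simp add: c1_def)
    show ?thesis unfolding e
    proof (intro ballI impI)
      fix C D assume C: "C \<in> insert (Pos n) ` T n c1 \<union> insert (Neg n) ` T n (c - c1)"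
        and D: "D \<in> insert (Pos n) ` T n c1 \<union> insert (Neg n) ` T n (c - c1)" and ne: "C \<noteq> D"
      from C D ne show "\<exists>x\<in>C. comp_lit x \<in> D"
      proof (elim UnE imageE)
        fix C' D' assume a: "D' \<in> T n c1" "D = insert (Pos n) D'" "C' \<in> T n c1" "C = insert (Pos n) C'" "C \<noteq> D"
        then have "C' \<noteq> D'" by auto
        then obtain x where "x \<in> C'" "comp_lit x \<in> D'" using Suc.IH a by blast
        then show ?thesis using a by auto
      next
        fix C' D' assume a: "D' \<in> T n (c-c1)" "D = insert (Neg n) D'" "C' \<in> T n (c-c1)" "C = insert (Neg n) C'" "C \<noteq> D"
        then have "C' \<noteq> D'" by auto
        then obtain x where "x \<in> C'" "comp_lit x \<in> D'" using Suc.IH a by blast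
        then show ?thesis using a by auto
      next
        fix C' D' assume a: "D = insert (Neg n) D'" "C = insert (Pos n) C'"
        then show ?thesis by (auto intro!: bexI[of _ "Pos n"])
      next
        fix C' D' assume a: "D = insert (Pos n) D'" "C = insert (Neg n) C'"
        then show ?thesis by (auto intro!: bexI[of _ "Neg n"])
      qed
    qed
  qed
qed

lemma T_vars: "n + 1 \<le> c \<Longrightarrow> c \<le> 2^n \<Longrightarrow> vars (T n c) = {..<n}"
proof (induction n arbitrary: c)
  case 0
  then show ?case by (simp add: vars_def)
next
  case (Suc n)
  define c1 where "c1 = min (2^n) (c-1)"
  have np: "n + 1 \<le> (2::nat)^n" by (induction n) auto
  have h: "n + 1 \<le> c1" "c1 \<le> 2^n" using Suc.prems np by (auto simp: c1_def)
  have e: "T (Suc n) c = insert (Pos n) ` T n c1 \<union> insert (Neg n) ` T n (c - c1)"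
    using Suc.prems by (simp add: c1_def)
  have v1: "vars (T n c1) = {..<n}" using Suc.IH h by blast
  have ne: "T n c1 \<noteq> {}" using T_card[of c1 n] h by auto
  have "vars (insert (Pos n) ` T n c1) = insert n (vars (T n c1))"
    using ne unfolding vars_def by auto
  moreover have "vars (insert (Neg n) ` T n (c - c1)) \<subseteq> {..<Suc n}"
    using T_sub[of n "c - c1"] unfolding vars_def by fastforce
  moreover have "vars (A \<union> B) = vars A \<union> vars B" for A B unfolding vars_def by auto
  ultimately show ?case unfolding e using v1 by auto
qed

lemma lit_true_cong: "a (lit_var x) = b (lit_var x) \<Longrightarrow> lit_true a x = lit_true b x"
  by (cases x) auto

lemma lit_true_comp: "lit_true a (comp_lit x) = (\<not> lit_true a x)"
  by (cases x) auto

lemma comp_comp: "comp_lit (comp_lit x) = x"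
  by (cases x) auto

lemma vars_finite: "is_clause_set F \<Longrightarrow> finite (vars F)"
  unfolding is_clause_set_def is_clause_def vars_def by auto

lemma MU_bound:
  assumes "F \<in> MU"
  shows "ncls F \<le> 2 ^ nvars F"
proof -
  have cs: "is_clause_set F" and uns: "\<not> satisfiable F"
    and mins: "\<forall>C\<in>F. satisfiable (F - {C})" using assms unfolding MU_def by auto
  define V where "V = vars F"
  have finV: "finite V" using vars_finite cs V_def by simp
  define asg where "asg C = (SOME a. \<forall>D\<in>F - {C}. \<exists>x\<in>D. lit_true a x)" for C
  have sat: "\<forall>D\<in>F - {C}. \<exists>x\<in>D. lit_true (asg C) x" if "C \<in> F" for C
  proof -
    have "\<exists>a. \<forall>D\<in>F - {C}. \<exists>x\<in>D. lit_true a x" using mins that unfolding satisfiable_def by blast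
    then show ?thesis unfolding asg_def by (rule someI_ex)
  qed
  have fal: "\<forall>x\<in>C. \<not> lit_true (asg C) x" if "C \<in> F" for C
  proof (rule ccontr)
    assume "\<not> (\<forall>x\<in>C. \<not> lit_true (asg C) x)"
    then have "\<forall>D\<in>F. \<exists>x\<in>D. lit_true (asg C) x" using sat[OF that] by blast
    then show False using uns unfolding satisfiable_def by blast
  qed
  define g where "g C = {v\<in>V. asg C v}" for C
  have inj: "inj_on g F"
  proof (rule inj_onI, rule ccontr)
    fix C D assume C: "C \<in> F" and D: "D \<in> F" and eq: "g C = g D" and ne: "C \<noteq> D"
    obtain x where x: "x \<in> D" "lit_true (asg C) x" using sat[OF C] D ne by blast
    have "lit_var x \<in> V" using x(1) D unfolding V_def vars_def by blast
    then have "asg C (lit_var x) = asg D (lit_var x)" using eq unfolding g_def by blast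
    then have "lit_true (asg D) x" using x(2) lit_true_cong by metis
    then show False using fal[OF D] x(1) by blast
  qed
  have "g ` F \<subseteq> Pow V" unfolding g_def by auto
  then have "card (g ` F) \<le> card (Pow V)" using finV by (simp add: card_mono)
  then have "card F \<le> 2 ^ card V" using inj finV by (simp add: card_image card_Pow)
  then show ?thesis unfolding ncls_def nvars_def V_def .
qed

lemma UHIT_MU: "F \<in> UHIT \<Longrightarrow> F \<in> MU"
proof -
  assume "F \<in> UHIT"
  then have cs: "is_clause_set F" and uns: "\<not> satisfiable F" and hit: "hitting F"
    unfolding UHIT_def by auto
  have "satisfiable (F - {C})" if C: "C \<in> F" for C
  proof -
    define a where "a v = (Neg v \<in> C)" for v
    have cl: "C \<inter> comp_set C = {}" using cs C unfolding is_clause_set_def is_clause_def by auto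
    have f: "\<not> lit_true a z" if "z \<in> C" for z
    proof (cases z)
      case (Pos v)
      have "comp_lit z \<in> comp_lit ` C" using that by (rule imageI)
      then have "Neg v \<in> comp_set C" using Pos unfolding comp_set_def by simp
      then have "Neg v \<notin> C" using cl by blast
      then show ?thesis using Pos a_def by simp
    next
      case (Neg v)
      then show ?thesis using that a_def by simp
    qed
    have "\<exists>x\<in>D. lit_true a x" if D: "D \<in> F - {C}" for D
    proof -
      have "D \<inter> comp_set C \<noteq> {}" using hit D C unfolding hitting_def by blast
      then obtain z where z: "z \<in> C" "comp_lit z \<in> D" unfolding comp_set_def by blast
      have "lit_true a (comp_lit z)" using f[OF z(1)] by (simp add: lit_true_comp)
      then show ?thesis using z(2) by blast
    qed
    then show ?thesis unfolding satisfiable_def by blast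
  qed
  then show "F \<in> MU" using cs uns unfolding MU_def by blast
qed

lemma T_UHIT: "T n c \<in> UHIT"
proof -
  have "is_clause (C)" if "C \<in> T n c" for C
  proof -
    have "finite C" using T_fin that by blast
    moreover have "C \<inter> comp_lit ` C = {}"
    proof (rule ccontr)
      assume "C \<inter> comp_lit ` C \<noteq> {}"
      then obtain x where x: "x \<in> C" "comp_lit x \<in> C" by blast
      then show False using T_clause[of n c] that by blast
    qed
    ultimately show ?thesis unfolding is_clause_def comp_set_def by blast
  qed
  then have "is_clause_set (T n c)"
    unfolding is_clause_set_def using T_fin by blast
  moreover have "\<not> satisfiable (T n c)"
  proof
    assume "satisfiable (T n c)"
    then obtain a where a: "\<forall>C\<in>T n c. \<exists>x\<in>C. lit_true a x" unfolding satisfiable_def by blast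
    obtain C where "C \<in> T n c" "\<forall>x\<in>C. \<not> lit_true a x" using T_unsat[of n c a] by blast
    then show False using a by blast
  qed
  moreover have "hitting (T n c)" unfolding hitting_def comp_set_def
  proof (intro ballI impI)
    fix C D assume "C \<in> T n c" "D \<in> T n c" "C \<noteq> D"
    then obtain x where "x \<in> C" "comp_lit x \<in> D" using T_hit by blast
    then have "comp_lit (comp_lit x) \<in> comp_lit ` D" by (intro imageI)
    then have "x \<in> comp_lit ` D" by (simp add: comp_comp)
    then show "C \<inter> comp_lit ` D \<noteq> {}" using \<open>x \<in> C\<close> by blast
  qed
  ultimately show ?thesis unfolding UHIT_def by blast
qed

lemma pow_ge: "2 * k \<le> (2::nat) ^ k"
proof (induction k)
  case (Suc k)
  then show ?case by (cases k) auto
qed simp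

lemma ofun_le: "(2::int) ^ n - int n \<ge> int k \<Longrightarrow> ofun k \<le> n"
  unfolding ofun_def by (rule Least_le)

lemma ofun_prop: "ofun k \<le> n \<Longrightarrow> (2::int) ^ n - int n \<ge> int k"
proof -
  assume a: "ofun k \<le> n"
  have w: "(2::int) ^ k - int k \<ge> int k"
  proof -
    have "2 * k \<le> (2::nat) ^ k" by (rule pow_ge)
    then have "int (2 * k) \<le> int (2 ^ k)" by (simp only: of_nat_le_iff)
    then show ?thesis by simp
  qed
  have b0: "(2::int) ^ ofun k - int (ofun k) \<ge> int k"
    unfolding ofun_def by (rule LeastI[of _ k], rule w)
  show ?thesis using a
  proof (induction n rule: dec_induct)
    case base then show ?case using b0 by simp
  next
    case (step m)
    have "(1::int) \<le> 2 ^ m" by simp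
    moreover have "(2::int) ^ Suc m = 2 * 2 ^ m" by simp
    ultimately show ?case using step.IH by linarith
  qed
qed

theorem theorem6p13:
  fixes k :: nat
  assumes "k \<ge> 1"
  shows "nvars ` with_deficiency UHIT (int k) = nvars ` with_deficiency MU (int k)
       \<and> nvars ` with_deficiency MU (int k) = {n. n \<ge> ofun k}
       \<and> ncls ` with_deficiency UHIT (int k) = ncls ` with_deficiency MU (int k)
       \<and> ncls ` with_deficiency MU (int k) = {m. m \<ge> 1 \<and> m \<ge> ofun k + k}"
proof -
  let ?A = "with_deficiency UHIT (int k)" and ?B = "with_deficiency MU (int k)"
  have AB: "?A \<subseteq> ?B" unfolding with_deficiency_def using UHIT_MU by blast
  have cB: "ncls F = nvars F + k \<and> nvars F \<ge> ofun k" if "F \<in> ?B" for F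
  proof -
    have F: "F \<in> MU" "int (ncls F) - int (nvars F) = int k"
      using that unfolding with_deficiency_def deficiency_def by auto
    have c: "ncls F = nvars F + k" using F(2) by simp
    have "ncls F \<le> 2 ^ nvars F" using MU_bound[OF F(1)] .
    then have "int (ncls F) \<le> int (2 ^ nvars F)" by (simp only: of_nat_le_iff)
    then have "int (ncls F) \<le> 2 ^ nvars F" by simp
    then have "(2::int) ^ nvars F - int (nvars F) \<ge> int k" using F(2) by linarith
    then show ?thesis using c ofun_le[of k "nvars F"] by simp
  qed
  have cA: "\<exists>F\<in>?A. nvars F = n \<and> ncls F = n + k" if "n \<ge> ofun k" for n
  proof -
    have "(2::int) ^ n - int n \<ge> int k" using ofun_prop that by blast
    then have "int (n + k) \<le> int (2 ^ n)" by simp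
    then have le: "n + k \<le> 2 ^ n" by linarith
    have v: "vars (T n (n + k)) = {..<n}" using T_vars[OF _ le] assms by simp
    have cc: "card (T n (n + k)) = n + k" using T_card[OF _ le] assms by simp
    have "T n (n + k) \<in> ?A" unfolding with_deficiency_def deficiency_def ncls_def nvars_def
      using T_UHIT v cc by simp
    moreover have "nvars (T n (n + k)) = n \<and> ncls (T n (n + k)) = n + k"
      using v cc unfolding nvars_def ncls_def by simp
    ultimately show ?thesis by blast
  qed
  have n1: "nvars ` ?B \<subseteq> {n. n \<ge> ofun k}" using cB by auto
  have n2: "{n. n \<ge> ofun k} \<subseteq> nvars ` ?A" 
  proof
    fix n assume "n \<in> {n. n \<ge> ofun k}"
    then obtain F where "F \<in> ?A" "nvars F = n" using cA by blast
    then show "n \<in> nvars ` ?A" by (metis imageI)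
  qed
  have m1: "ncls ` ?B \<subseteq> {m. m \<ge> 1 \<and> m \<ge> ofun k + k}"
  proof
    fix m assume "m \<in> ncls ` ?B"
    then obtain F where "F \<in> ?B" "m = ncls F" by blast
    then have "m = nvars F + k" "nvars F \<ge> ofun k" using cB by auto
    then show "m \<in> {m. m \<ge> 1 \<and> m \<ge> ofun k + k}" using assms by simp
  qed
  have m2: "{m. m \<ge> 1 \<and> m \<ge> ofun k + k} \<subseteq> ncls ` ?A"
  proof
    fix m assume "m \<in> {m. m \<ge> 1 \<and> m \<ge> ofun k + k}"
    then have "m - k \<ge> ofun k" "m = (m - k) + k" by auto
    then obtain F where "F \<in> ?A" "ncls F = m" using cA[of "m - k"] by metis
    then show "m \<in> ncls ` ?A" by (metis imageI)
  qed
  have i1: "nvars ` ?A \<subseteq> nvars ` ?B" "ncls ` ?A \<subseteq> ncls ` ?B" using AB by auto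
  have e1: "nvars ` ?B = {n. n \<ge> ofun k}" using n1 n2 i1(1) by (rule_tac subset_antisym) auto
  have e2: "nvars ` ?A = nvars ` ?B" using n1 n2 i1(1) by (rule_tac subset_antisym) auto
  have e3: "ncls ` ?B = {m. m \<ge> 1 \<and> m \<ge> ofun k + k}" using m1 m2 i1(2) by (rule_tac subset_antisym) auto
  have e4: "ncls ` ?A = ncls ` ?B" using m1 m2 i1(2) by (rule_tac subset_antisym) auto
  show ?thesis using e1 e2 e3 e4 by simp
qed

end
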